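(* Let $s\in(0,1)$ and $\boldsymbol\mu\in(\mathbb{R}^d)^M$, and let $\boldsymbol\mu^{\mathrm{new}}=\boldsymbol\mu+s\nabla\mathcal{L}(\boldsymbol\mu)$ be the first-order EM update. Then $$\mathcal{L}(\boldsymbol\mu^{\mathrm{new}})\ge\mathcal{L}(\boldsymbol\mu)+\frac{s}{2}\|\nabla\mathcal{L}(\boldsymbol\mu)\|_2^2.$$ In particular, the update strictly increases $\mathcal{L}$ whenever $\nabla\mathcal{L}(\boldsymbol\mu)\neq0$.
   Context: Write $\phi(x \mid \mu, I)$ for the density of $\mathcal{N}(\mu,I)$ on $\mathbb{R}^d$. For fixed true centers $\mu_1^*,\dots,\mu_M^*\in\mathbb{R}^d$, $X$ is distributed according to the mixture with density $\frac1M\sum_i\phi(x\mid\mu_i^*,I)$. The population log-likelihood is $$\mathcal{L}(\boldsymbol{\mu}) = \mathbb{E}\log\Big(\frac1M\sum_{i=1}^M \phi(X\mid \mu_i, I)\Big).$$ The gradient block for $\mu_i$ is $\nabla_{\mu_i}\mathcal{L}(\boldsymbol\mu)=\mathbb{E}[w_i(X)(X-\mu_i)]$, where $$w_i(x)=\frac{\phi(x\mid\mu_i,I)}{\sum_j\phi(x\mid\mu_j,I)}.$$ *)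

theory Defs
  imports "HOL-Analysis.Analysis"
begin

text \<open>Dimension d is the finite index type 'd (d = CARD('d)); the number of
components M is the finite index type 'm (M = CARD('m)).  A parameter
boldface mu in (R^d)^M is a function 'm => real^'d.\<close>

definition gauss_pdf :: "real^'d \<Rightarrow> real^'d \<Rightarrow> real" where
  "gauss_pdf x \<mu> = (2 * pi) powr (- real CARD('d) / 2) * exp (- (norm (x - \<mu>))\<^sup>2 / 2)"

definition mix_pdf :: "('m::finite \<Rightarrow> real^'d) \<Rightarrow> real^'d \<Rightarrow> real" where
  "mix_pdf \<mu> x = (1 / real CARD('m)) * (\<Sum>i\<in>UNIV. gauss_pdf x (\<mu> i))"

text \<open>Population log-likelihood: expectation of log(mixture density at mu) when
X has the mixture density with true centers mustar.\<close>
definition pop_loglik :: "('m::finite \<Rightarrow> real^'d) \<Rightarrow> ('m \<Rightarrow> real^'d) \<Rightarrow> real" where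
  "pop_loglik \<mu>star \<mu> = (\<integral>x. mix_pdf \<mu>star x * ln (mix_pdf \<mu> x) \<partial>lborel)"

definition resp :: "('m::finite \<Rightarrow> real^'d) \<Rightarrow> 'm \<Rightarrow> real^'d \<Rightarrow> real" where
  "resp \<mu> i x = gauss_pdf x (\<mu> i) / (\<Sum>j\<in>UNIV. gauss_pdf x (\<mu> j))"

text \<open>Gradient block for mu_i: E[w_i(X)(X - mu_i)], X ~ mixture with centers mustar.\<close>
definition grad_loglik :: "('m::finite \<Rightarrow> real^'d) \<Rightarrow> ('m \<Rightarrow> real^'d) \<Rightarrow> 'm \<Rightarrow> real^'d" where
  "grad_loglik \<mu>star \<mu> i = (\<integral>x. (mix_pdf \<mu>star x * resp \<mu> i x) *\<^sub>R (x - \<mu> i) \<partial>lborel)"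

definition grad_norm_sq :: "('m::finite \<Rightarrow> real^'d) \<Rightarrow> ('m \<Rightarrow> real^'d) \<Rightarrow> real" where
  "grad_norm_sq \<mu>star \<mu> = (\<Sum>i\<in>UNIV. (norm (grad_loglik \<mu>star \<mu> i))\<^sup>2)"

end

theory Submission imports Defs "HOL-Probability.Probability" begin

lemma norm_sq_basis: "(norm (y::'a::euclidean_space))\<^sup>2 = (\<Sum>b\<in>Basis. (y \<bullet> b)\<^sup>2)"
  by (simp add: euclidean_inner[of y y, symmetric] power2_eq_square flip: power2_norm_eq_inner)

lemma gauss_prod:
  fixes x \<mu> :: "real^'d"
  shows "gauss_pdf x \<mu> = (\<Prod>b\<in>Basis. std_normal_density ((x - \<mu>) \<bullet> b))"
proof -
  have "(\<Prod>b\<in>(Basis::(real^'d) set). std_normal_density ((x - \<mu>) \<bullet> b))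
      = (\<Prod>b\<in>(Basis::(real^'d) set). 1 / sqrt (2*pi)) * (\<Prod>b\<in>(Basis::(real^'d) set). exp (- ((x - \<mu>) \<bullet> b)\<^sup>2 / 2))"
    unfolding std_normal_density_def by (rule prod.distrib)
  also have "(\<Prod>b\<in>(Basis::(real^'d) set). exp (- ((x - \<mu>) \<bullet> b)\<^sup>2 / 2)) = exp (- (norm (x - \<mu>))\<^sup>2 / 2)"
    by (simp add: exp_sum[symmetric] norm_sq_basis sum_negf sum_divide_distrib)
  also have "(\<Prod>b\<in>(Basis::(real^'d) set). 1 / sqrt (2*pi)) = (2 * pi) powr (- real CARD('d) / 2)"
  proof -
    have "(\<Prod>b\<in>(Basis::(real^'d) set). 1 / sqrt (2*pi)) = (1 / sqrt (2*pi)) ^ CARD('d)"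
      by simp
    also have "\<dots> = ((2*pi) powr (-1/2)) ^ CARD('d)"
      by (simp add: powr_minus_divide powr_half_sqrt)
    also have "\<dots> = (2 * pi) powr (- real CARD('d) / 2)"
      by (simp add: powr_realpow[symmetric] powr_powr)
    finally show ?thesis .
  qed
  finally show ?thesis by (simp add: gauss_pdf_def)
qed

lemma gauss_pdf_nonneg: "0 \<le> gauss_pdf x \<mu>"
  by (simp add: gauss_pdf_def)

lemma gauss_pdf_pos: "0 < gauss_pdf x \<mu>"
  by (simp add: gauss_pdf_def)

lemma gauss_pdf_meas[measurable]: "(\<lambda>x. gauss_pdf x a) \<in> borel_measurable borel"
  unfolding gauss_pdf_def by measurable

lemma std_shift: "std_normal_density (t - c) = normal_density c 1 t"
  by (simp add: normal_density_def)

lemma gauss_nn: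
  fixes a :: "real^'d"
  shows "(\<integral>\<^sup>+x. ennreal (gauss_pdf x a) \<partial>lborel) = 1"
proof -
  have "(\<integral>\<^sup>+x. ennreal (gauss_pdf x a) \<partial>lborel)
     = (\<integral>\<^sup>+x. (\<Prod>b\<in>Basis. (\<lambda>b t. ennreal (normal_density (a \<bullet> b) 1 t)) b (x \<bullet> b)) \<partial>lborel)"
    by (simp add: gauss_prod prod_ennreal inner_diff_left std_shift)
  also have "\<dots> = (\<Prod>b\<in>(Basis::(real^'d) set). (\<integral>\<^sup>+t. ennreal (normal_density (a \<bullet> b) 1 t) \<partial>lborel))"
    by (rule nn_integral_lborel_prod) auto
  also have "\<dots> = 1"
    by (simp add: nn_integral_eq_integral)
  finally show ?thesis .
qed

lemma gauss_integrable: "integrable lborel (\<lambda>x::real^'d. gauss_pdf x a)"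
  by (rule integrableI_bounded) (auto simp: gauss_pdf_nonneg gauss_nn)

lemma gauss_integral:
  fixes a :: "real^'d"
  shows "(\<integral>x. gauss_pdf x a \<partial>lborel) = (1::real)"
proof -
  have "ennreal (\<integral>x. gauss_pdf x a \<partial>lborel) = 1"
    by (subst nn_integral_eq_integral[symmetric]) (auto simp: gauss_integrable gauss_pdf_nonneg gauss_nn)
  then show ?thesis by simp
qed

lemma gauss_mom2_nn:
  fixes a :: "real^'d"
  shows "(\<integral>\<^sup>+x. ennreal (gauss_pdf x a * (norm (x - a))\<^sup>2) \<partial>lborel) < \<infinity>"
proof -
  define f where "f c b t = ennreal (normal_density (a \<bullet> b) 1 t * (if b = c then (t - a \<bullet> b)^2 else 1))"
    for c b :: "real^'d" and t
  have eq: "ennreal (gauss_pdf x a * (norm (x - a))\<^sup>2) = (\<Sum>c\<in>Basis. \<Prod>b\<in>Basis. f c b (x \<bullet> b))" for x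
  proof -
    have "gauss_pdf x a * (norm (x - a))\<^sup>2 = (\<Sum>c\<in>Basis. gauss_pdf x a * ((x - a) \<bullet> c)\<^sup>2)"
      by (simp add: norm_sq_basis sum_distrib_left)
    also have "\<dots> = (\<Sum>c\<in>Basis. \<Prod>b\<in>Basis. normal_density (a \<bullet> b) 1 (x \<bullet> b) * (if b = c then (x \<bullet> b - a \<bullet> b)^2 else 1))"
    proof (rule sum.cong[OF refl])
      fix c :: "real^'d" assume c: "c \<in> Basis"
      have "(\<Prod>b\<in>Basis. normal_density (a \<bullet> b) 1 (x \<bullet> b) * (if b = c then (x \<bullet> b - a \<bullet> b)^2 else 1))
          = (\<Prod>b\<in>Basis. normal_density (a \<bullet> b) 1 (x \<bullet> b)) * (\<Prod>b\<in>Basis. (if b = c then (x \<bullet> b - a \<bullet> b)^2 else 1))"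
        by (rule prod.distrib)
      also have "(\<Prod>b\<in>Basis. (if b = c then (x \<bullet> b - a \<bullet> b)^2 else 1)) = ((x - a) \<bullet> c)\<^sup>2"
        using c by (simp add: prod.delta inner_diff_left)
      finally show "gauss_pdf x a * ((x - a) \<bullet> c)\<^sup>2 = (\<Prod>b\<in>Basis. normal_density (a \<bullet> b) 1 (x \<bullet> b) * (if b = c then (x \<bullet> b - a \<bullet> b)^2 else 1))"
        by (simp add: gauss_prod inner_diff_left std_shift)
    qed
    finally show ?thesis
      unfolding f_def by (simp add: prod_ennreal sum_nonneg prod_nonneg flip: sum_ennreal)
  qed
  have fin: "(\<integral>\<^sup>+t. f c b t \<partial>lborel) < \<infinity>" for c b
  proof -
    have "integrable lborel (\<lambda>t. normal_density (a \<bullet> b) 1 t * (if b = c then (t - a \<bullet> b)^2 else 1))"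
      using integrable_normal_moment[where \<mu>="a \<bullet> b" and \<sigma>=1 and k=2] by (cases "b = c") auto
    then show ?thesis unfolding f_def
      by (subst nn_integral_eq_integral) auto
  qed
  have "(\<integral>\<^sup>+x. ennreal (gauss_pdf x a * (norm (x - a))\<^sup>2) \<partial>lborel)
      = (\<Sum>c\<in>Basis. \<integral>\<^sup>+x. (\<Prod>b\<in>Basis. f c b (x \<bullet> b)) \<partial>lborel)"
    unfolding eq by (rule nn_integral_sum) (auto simp: f_def)
  also have "\<dots> = (\<Sum>c\<in>Basis. \<Prod>b\<in>(Basis::(real^'d) set). \<integral>\<^sup>+t. f c b t \<partial>lborel)"
    by (intro sum.cong refl nn_integral_lborel_prod) (auto simp: f_def)
  also have "\<dots> < \<infinity>"
    using fin by (simp add: top.not_eq_extremum[symmetric] ennreal_prod_eq_top)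
  finally show ?thesis .
qed

lemma gauss_mom2_integrable: "integrable lborel (\<lambda>x::real^'d. gauss_pdf x a * (norm (x - a))\<^sup>2)"
proof (rule integrableI_bounded)
  have "\<And>x. norm (gauss_pdf x a * (norm (x - a))\<^sup>2) = gauss_pdf x a * (norm (x - a))\<^sup>2"
    by (simp add: abs_of_nonneg gauss_pdf_nonneg)
  then show "(\<integral>\<^sup>+x. ennreal (norm (gauss_pdf x a * (norm (x - a))\<^sup>2)) \<partial>lborel) < \<infinity>"
    using gauss_mom2_nn by simp
qed simp

lemma mix_meas[measurable]: "(\<lambda>x. mix_pdf \<nu> x) \<in> borel_measurable borel"
  unfolding mix_pdf_def by measurable

lemma resp_meas[measurable]: "(\<lambda>x. resp \<nu> i x) \<in> borel_measurable borel"
  unfolding resp_def by measurable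

lemma mix_pos: "0 < mix_pdf \<nu> x"
  unfolding mix_pdf_def by (auto intro!: sum_pos gauss_pdf_pos divide_pos_pos)

lemma mix_nonneg: "0 \<le> mix_pdf \<nu> x"
  using mix_pos[of \<nu> x] by simp

lemma resp_nonneg: "0 \<le> resp \<nu> i x"
  unfolding resp_def by (auto intro!: divide_nonneg_nonneg sum_nonneg gauss_pdf_nonneg)

lemma resp_le1: "resp \<nu> i x \<le> 1"
proof -
  have "gauss_pdf x (\<nu> i) \<le> (\<Sum>j\<in>UNIV. gauss_pdf x (\<nu> j))"
    by (rule member_le_sum) (auto simp: gauss_pdf_nonneg)
  moreover have "0 < (\<Sum>j\<in>UNIV. gauss_pdf x (\<nu> j))"
    by (auto intro!: sum_pos gauss_pdf_pos)
  ultimately show ?thesis unfolding resp_def by simp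
qed

lemma resp_sum: "(\<Sum>i\<in>UNIV. resp \<nu> i x) = 1"
proof -
  have "0 < (\<Sum>j\<in>UNIV. gauss_pdf x (\<nu> j))"
    by (auto intro!: sum_pos gauss_pdf_pos)
  then show ?thesis unfolding resp_def by (simp add: sum_divide_distrib[symmetric])
qed

lemma sq_sum_le: "((u::real) + v)\<^sup>2 \<le> 2 * u\<^sup>2 + 2 * v\<^sup>2"
proof -
  have "0 \<le> (u - v)\<^sup>2" by simp
  then show ?thesis by (simp add: power2_eq_square algebra_simps)
qed

lemma gauss_mom2_integrable':
  fixes a c :: "real^'d"
  shows "integrable lborel (\<lambda>x. gauss_pdf x a * (norm (x - c))\<^sup>2)"
proof (rule Bochner_Integration.integrable_bound)
  show "integrable lborel (\<lambda>x. 2 * (gauss_pdf x a * (norm (x - a))\<^sup>2) + (2 * (norm (a - c))\<^sup>2) * gauss_pdf x a)"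
    by (auto intro!: integrable_add integrable_mult_right gauss_mom2_integrable gauss_integrable)
  show "AE x in lborel. norm (gauss_pdf x a * (norm (x - c))\<^sup>2)
     \<le> norm (2 * (gauss_pdf x a * (norm (x - a))\<^sup>2) + (2 * (norm (a - c))\<^sup>2) * gauss_pdf x a)"
  proof (rule AE_I2)
    fix x
    have tri: "norm (x - c) \<le> norm (x - a) + norm (a - c)"
      using norm_triangle_ineq[of "x - a" "a - c"] by simp
    have "(norm (x - c))\<^sup>2 \<le> (norm (x - a) + norm (a - c))\<^sup>2"
      using tri by (simp add: power_mono)
    also have "\<dots> \<le> 2 * (norm (x - a))\<^sup>2 + 2 * (norm (a - c))\<^sup>2"
      by (rule sq_sum_le)
    finally have "gauss_pdf x a * (norm (x - c))\<^sup>2 \<le> gauss_pdf x a * (2 * (norm (x - a))\<^sup>2 + 2 * (norm (a - c))\<^sup>2)"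
      by (simp add: mult_left_mono gauss_pdf_nonneg)
    then show "norm (gauss_pdf x a * (norm (x - c))\<^sup>2)
     \<le> norm (2 * (gauss_pdf x a * (norm (x - a))\<^sup>2) + (2 * (norm (a - c))\<^sup>2) * gauss_pdf x a)"
      using gauss_pdf_nonneg[of x a] by (simp add: algebra_simps abs_of_nonneg)
  qed
qed simp

lemma mix_integrable: "integrable lborel (\<lambda>x::real^'d. mix_pdf \<nu> x)"
  unfolding mix_pdf_def by (auto intro!: integrable_mult_right integrable_sum gauss_integrable)

lemma mix_integral:
  fixes \<nu> :: "'m::finite \<Rightarrow> real^'d"
  shows "(\<integral>x. mix_pdf \<nu> x \<partial>lborel) = 1"
  unfolding mix_pdf_def
  by (simp add: integral_sum gauss_integrable gauss_integral)

lemma mix_mom2_integrable: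
  fixes \<nu> :: "'m::finite \<Rightarrow> real^'d"
  shows "integrable lborel (\<lambda>x. mix_pdf \<nu> x * (K + (norm (x - c))\<^sup>2))"
proof -
  have "integrable lborel (\<lambda>x. (1 / real CARD('m)) * (\<Sum>i\<in>UNIV. K * gauss_pdf x (\<nu> i) + gauss_pdf x (\<nu> i) * (norm (x - c))\<^sup>2))"
    apply (rule Bochner_Integration.integrable_mult_right)
    apply (rule Bochner_Integration.integrable_sum)
    apply (rule Bochner_Integration.integrable_add)
    using gauss_integrable gauss_mom2_integrable' apply auto
    done
  moreover have "(\<lambda>x. (1 / real CARD('m)) * (\<Sum>i\<in>UNIV. K * gauss_pdf x (\<nu> i) + gauss_pdf x (\<nu> i) * (norm (x - c))\<^sup>2))
    = (\<lambda>x. mix_pdf \<nu> x * (K + (norm (x - c))\<^sup>2))"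
    by (simp add: fun_eq_iff mix_pdf_def sum.distrib sum_distrib_left sum_distrib_right algebra_simps)
  ultimately show ?thesis by simp
qed

lemma gauss_le1: "gauss_pdf x (\<mu>::real^'d) \<le> 1"
proof -
  have "1 \<le> (2 * pi) powr (real CARD('d) / 2)"
    using pi_gt3 by (intro ge_one_powr_ge_zero) auto
  then have c: "(2 * pi) powr (- real CARD('d) / 2) \<le> 1"
    by (simp add: powr_minus_divide divide_le_eq_1)
  have "exp (- (norm (x - \<mu>))\<^sup>2 / 2) \<le> 1" by simp
  then show ?thesis unfolding gauss_pdf_def
    using c by (intro mult_le_one) auto
qed

lemma ln_gauss: "ln (gauss_pdf x (c::real^'d)) = - (real CARD('d) / 2) * ln (2 * pi) - (norm (x - c))\<^sup>2 / 2"
  unfolding gauss_pdf_def using pi_gt_zero by (simp add: ln_mult)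

lemma ln_mix_bound:
  fixes \<nu> :: "'m::finite \<Rightarrow> real^'d"
  shows "\<bar>ln (mix_pdf \<nu> x)\<bar> \<le> (ln (real CARD('m)) + real CARD('d) / 2 * ln (2 * pi)) + (norm (x - \<nu> j))\<^sup>2"
proof -
  have M: "1 \<le> real CARD('m)" by simp
  have up: "mix_pdf \<nu> x \<le> 1"
  proof -
    have "(\<Sum>i\<in>UNIV. gauss_pdf x (\<nu> i)) \<le> (\<Sum>i\<in>(UNIV::'m set). 1)"
      by (intro sum_mono gauss_le1)
    then show ?thesis unfolding mix_pdf_def by (simp add: divide_le_eq_1)
  qed
  have lo: "gauss_pdf x (\<nu> j) / real CARD('m) \<le> mix_pdf \<nu> x"
  proof -
    have "gauss_pdf x (\<nu> j) \<le> (\<Sum>i\<in>UNIV. gauss_pdf x (\<nu> i))"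
      by (rule member_le_sum) (auto simp: gauss_pdf_nonneg)
    then show ?thesis unfolding mix_pdf_def using M by (simp add: divide_right_mono)
  qed
  have "ln (gauss_pdf x (\<nu> j) / real CARD('m)) \<le> ln (mix_pdf \<nu> x)"
    using lo gauss_pdf_pos[of x "\<nu> j"] M mix_pos[of \<nu> x] by (subst ln_le_cancel_iff) auto
  moreover have "ln (gauss_pdf x (\<nu> j) / real CARD('m)) = ln (gauss_pdf x (\<nu> j)) - ln (real CARD('m))"
    using gauss_pdf_pos[of x "\<nu> j"] M by (simp add: ln_div)
  moreover have "ln (mix_pdf \<nu> x) \<le> 0" using up mix_pos[of \<nu> x] by simp
  moreover have "0 \<le> ln (real CARD('m))" using M by simp
  moreover have "0 \<le> ln (2 * pi)" using pi_gt3 by simp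
  moreover have "0 \<le> real CARD('d) / 2 * ln (2 * pi)" using pi_gt3 by simp
  moreover have "0 \<le> (norm (x - \<nu> j))\<^sup>2" by simp
  ultimately show ?thesis unfolding ln_gauss by linarith
qed

lemma J2:
  fixes \<nu> \<mu>s :: "'m::finite \<Rightarrow> real^'d"
  shows "integrable lborel (\<lambda>x. mix_pdf \<mu>s x * ln (mix_pdf \<nu> x))"
proof (rule Bochner_Integration.integrable_bound)
  define K where "K = ln (real CARD('m)) + real CARD('d) / 2 * ln (2 * pi)"
  define c where "c = \<nu> undefined"
  show "integrable lborel (\<lambda>x. mix_pdf \<mu>s x * (K + (norm (x - c))\<^sup>2))"
    by (rule mix_mom2_integrable)
  show "AE x in lborel. norm (mix_pdf \<mu>s x * ln (mix_pdf \<nu> x)) \<le> norm (mix_pdf \<mu>s x * (K + (norm (x - c))\<^sup>2))"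
  proof (rule AE_I2)
    fix x
    have b: "\<bar>ln (mix_pdf \<nu> x)\<bar> \<le> K + (norm (x - c))\<^sup>2"
      unfolding K_def c_def by (rule ln_mix_bound)
    have "0 \<le> \<bar>ln (mix_pdf \<nu> x)\<bar>" by simp
    then have "0 \<le> K + (norm (x - c))\<^sup>2" using b by linarith
    then show "norm (mix_pdf \<mu>s x * ln (mix_pdf \<nu> x)) \<le> norm (mix_pdf \<mu>s x * (K + (norm (x - c))\<^sup>2))"
      using b mix_nonneg[of \<mu>s x] by (simp add: abs_mult mult_left_mono)
  qed
qed simp

lemma J3:
  fixes \<nu> \<mu>s :: "'m::finite \<Rightarrow> real^'d"
  shows "integrable lborel (\<lambda>x. (mix_pdf \<mu>s x * resp \<nu> i x) *\<^sub>R (x - \<nu> i))"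
proof (rule Bochner_Integration.integrable_bound)
  show "integrable lborel (\<lambda>x. mix_pdf \<mu>s x * (1 + (norm (x - \<nu> i))\<^sup>2))"
    by (rule mix_mom2_integrable)
  show "AE x in lborel. norm ((mix_pdf \<mu>s x * resp \<nu> i x) *\<^sub>R (x - \<nu> i)) \<le> norm (mix_pdf \<mu>s x * (1 + (norm (x - \<nu> i))\<^sup>2))"
  proof (rule AE_I2)
    fix x
    have n: "norm (x - \<nu> i) \<le> 1 + (norm (x - \<nu> i))\<^sup>2"
    proof -
      have "0 \<le> (norm (x - \<nu> i) - 1)\<^sup>2" by simp
      then show ?thesis by (simp add: power2_eq_square algebra_simps) (smt (verit) norm_ge_zero)
    qed
    have "resp \<nu> i x * norm (x - \<nu> i) \<le> 1 * (1 + (norm (x - \<nu> i))\<^sup>2)"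
      using n resp_le1[of \<nu> i x] resp_nonneg[of \<nu> i x] by (intro mult_mono) auto
    then have "mix_pdf \<mu>s x * (resp \<nu> i x * norm (x - \<nu> i)) \<le> mix_pdf \<mu>s x * (1 + (norm (x - \<nu> i))\<^sup>2)"
      using mix_nonneg[of \<mu>s x] by (intro mult_left_mono) auto
    then show "norm ((mix_pdf \<mu>s x * resp \<nu> i x) *\<^sub>R (x - \<nu> i)) \<le> norm (mix_pdf \<mu>s x * (1 + (norm (x - \<nu> i))\<^sup>2))"
      using mix_nonneg[of \<mu>s x] resp_nonneg[of \<nu> i x]
      by (simp add: abs_mult abs_of_nonneg mult.assoc add_nonneg_nonneg)
  qed
qed simp

lemma gauss_shift:
  fixes x a v :: "real^'d"
  shows "gauss_pdf x (a + v) = gauss_pdf x a * exp (v \<bullet> (x - a) - (norm v)\<^sup>2 / 2)"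
proof -
  have "(norm (x - (a + v)))\<^sup>2 = (norm (x - a))\<^sup>2 - 2 * (v \<bullet> (x - a)) + (norm v)\<^sup>2"
    by (simp add: power2_norm_eq_inner inner_diff_left inner_diff_right inner_add_left inner_add_right inner_commute algebra_simps)
  then have "- (norm (x - (a + v)))\<^sup>2 / 2 = - (norm (x - a))\<^sup>2 / 2 + (v \<bullet> (x - a) - (norm v)\<^sup>2 / 2)"
    by (simp add: field_simps)
  then show ?thesis unfolding gauss_pdf_def by (simp add: exp_add[symmetric] algebra_simps)
qed

lemma key:
  fixes \<nu> v :: "'m::finite \<Rightarrow> real^'d"
  shows "ln (mix_pdf \<nu> x) + (\<Sum>i\<in>UNIV. resp \<nu> i x * (v i \<bullet> (x - \<nu> i) - (norm (v i))\<^sup>2 / 2))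
         \<le> ln (mix_pdf (\<lambda>i. \<nu> i + v i) x)"
proof -
  define t where "t i = v i \<bullet> (x - \<nu> i) - (norm (v i))\<^sup>2 / 2" for i
  define S where "S = (\<Sum>j\<in>UNIV. gauss_pdf x (\<nu> j))"
  have S: "0 < S" unfolding S_def by (auto intro!: sum_pos gauss_pdf_pos)
  have r: "resp \<nu> i x = gauss_pdf x (\<nu> i) / S" for i unfolding resp_def S_def by simp
  have jen: "exp (\<Sum>i\<in>UNIV. resp \<nu> i x * t i) \<le> (\<Sum>i\<in>UNIV. resp \<nu> i x * exp (t i))"
    using convex_on_sum[of "UNIV::'m set" UNIV exp "\<lambda>i. resp \<nu> i x" t] exp_convex resp_sum[of \<nu> x] resp_nonneg[of \<nu> _ x]
    by simp
  have eq: "mix_pdf (\<lambda>i. \<nu> i + v i) x = mix_pdf \<nu> x * (\<Sum>i\<in>UNIV. resp \<nu> i x * exp (t i))"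
  proof -
    have "mix_pdf (\<lambda>i. \<nu> i + v i) x = (1 / real CARD('m)) * (\<Sum>i\<in>UNIV. gauss_pdf x (\<nu> i) * exp (t i))"
      unfolding mix_pdf_def t_def by (simp add: gauss_shift)
    also have "\<dots> = (1 / real CARD('m)) * (S * (\<Sum>i\<in>UNIV. resp \<nu> i x * exp (t i)))"
      using S by (simp add: r sum_distrib_left)
    also have "\<dots> = mix_pdf \<nu> x * (\<Sum>i\<in>UNIV. resp \<nu> i x * exp (t i))"
      unfolding mix_pdf_def S_def by simp
    finally show ?thesis .
  qed
  have "mix_pdf \<nu> x * exp (\<Sum>i\<in>UNIV. resp \<nu> i x * t i) \<le> mix_pdf (\<lambda>i. \<nu> i + v i) x"
    unfolding eq using jen mix_nonneg[of \<nu> x] by (rule mult_left_mono)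
  then have "ln (mix_pdf \<nu> x * exp (\<Sum>i\<in>UNIV. resp \<nu> i x * t i)) \<le> ln (mix_pdf (\<lambda>i. \<nu> i + v i) x)"
    using mix_pos[of \<nu> x] by (subst ln_le_cancel_iff) (auto intro: mix_pos)
  then show ?thesis using mix_pos[of \<nu> x] by (simp add: ln_mult t_def)
qed

theorem mainTheorem7:
  fixes \<mu>star \<mu> :: "'m::finite \<Rightarrow> real^'d" and s :: real
  assumes "0 < s" and "s < 1"
  shows "pop_loglik \<mu>star (\<lambda>i. \<mu> i + s *\<^sub>R grad_loglik \<mu>star \<mu> i)
           \<ge> pop_loglik \<mu>star \<mu> + s / 2 * grad_norm_sq \<mu>star \<mu>
         \<and> ((\<exists>i. grad_loglik \<mu>star \<mu> i \<noteq> 0) \<longrightarrow>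
           pop_loglik \<mu>star (\<lambda>i. \<mu> i + s *\<^sub>R grad_loglik \<mu>star \<mu> i) > pop_loglik \<mu>star \<mu>)"
proof -
  define g where "g = grad_loglik \<mu>star \<mu>"
  define N where "N = grad_norm_sq \<mu>star \<mu>"
  define p where "p = mix_pdf \<mu>star"
  define F where "F i x = (p x * resp \<mu> i x) *\<^sub>R (x - \<mu> i)" for i x
  define \<mu>' where "\<mu>' = (\<lambda>i. \<mu> i + s *\<^sub>R g i)"
  have N_def': "N = (\<Sum>i\<in>UNIV. (norm (g i))\<^sup>2)" unfolding N_def grad_norm_sq_def g_def ..
  have gF: "g i = (\<integral>x. F i x \<partial>lborel)" for i
    unfolding g_def F_def p_def grad_loglik_def ..
  have pw: "p x * ln (mix_pdf \<mu> x) + s * (\<Sum>i\<in>UNIV. g i \<bullet> F i x) - s\<^sup>2 / 2 * N * p x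
       \<le> p x * ln (mix_pdf \<mu>' x)" for x
  proof -
    have termi: "s * (g i \<bullet> (resp \<mu> i x *\<^sub>R (x - \<mu> i))) - s\<^sup>2 / 2 * (norm (g i))\<^sup>2
        \<le> resp \<mu> i x * ((s *\<^sub>R g i) \<bullet> (x - \<mu> i) - (norm (s *\<^sub>R g i))\<^sup>2 / 2)" for i
    proof -
      have "resp \<mu> i x * (norm (g i))\<^sup>2 \<le> 1 * (norm (g i))\<^sup>2"
        using resp_le1[of \<mu> i x] by (intro mult_right_mono) auto
      then have "s\<^sup>2 / 2 * (resp \<mu> i x * (norm (g i))\<^sup>2) \<le> s\<^sup>2 / 2 * (norm (g i))\<^sup>2"
        by (intro mult_left_mono) auto
      then show ?thesis
        by (simp add: power_mult_distrib algebra_simps)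
    qed
    have "s * (\<Sum>i\<in>UNIV. g i \<bullet> (resp \<mu> i x *\<^sub>R (x - \<mu> i))) - s\<^sup>2 / 2 * N
        = (\<Sum>i\<in>UNIV. s * (g i \<bullet> (resp \<mu> i x *\<^sub>R (x - \<mu> i))) - s\<^sup>2 / 2 * (norm (g i))\<^sup>2)"
      unfolding N_def' by (simp add: sum_subtractf sum_distrib_left)
    also have "\<dots> \<le> (\<Sum>i\<in>UNIV. resp \<mu> i x * ((s *\<^sub>R g i) \<bullet> (x - \<mu> i) - (norm (s *\<^sub>R g i))\<^sup>2 / 2))"
      by (rule sum_mono) (rule termi)
    finally have "ln (mix_pdf \<mu> x) + (s * (\<Sum>i\<in>UNIV. g i \<bullet> (resp \<mu> i x *\<^sub>R (x - \<mu> i))) - s\<^sup>2 / 2 * N)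
        \<le> ln (mix_pdf \<mu>' x)"
      using key[of \<mu> x "\<lambda>i. s *\<^sub>R g i"] unfolding \<mu>'_def by linarith
    then have "p x * (ln (mix_pdf \<mu> x) + (s * (\<Sum>i\<in>UNIV. g i \<bullet> (resp \<mu> i x *\<^sub>R (x - \<mu> i))) - s\<^sup>2 / 2 * N))
        \<le> p x * ln (mix_pdf \<mu>' x)"
      using mix_nonneg[of \<mu>star x] unfolding p_def by (rule mult_left_mono)
    moreover have "p x * (\<Sum>i\<in>UNIV. g i \<bullet> (resp \<mu> i x *\<^sub>R (x - \<mu> i))) = (\<Sum>i\<in>UNIV. g i \<bullet> F i x)"
      unfolding F_def by (simp add: sum_distrib_left inner_scaleR_right mult.assoc)
    ultimately show ?thesis by (simp add: algebra_simps)
  qed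
  have intF: "integrable lborel (F i)" for i
    unfolding F_def p_def using J3[of \<mu>star \<mu> i] by simp
  have int1: "integrable lborel (\<lambda>x. p x * ln (mix_pdf \<mu> x))" unfolding p_def by (rule J2)
  have int2: "integrable lborel (\<lambda>x. p x * ln (mix_pdf \<mu>' x))" unfolding p_def by (rule J2)
  have intp: "integrable lborel p" unfolding p_def by (rule mix_integrable)
  have intS: "integrable lborel (\<lambda>x. s * (\<Sum>i\<in>UNIV. g i \<bullet> F i x))"
    using intF by (auto intro!: Bochner_Integration.integrable_mult_right Bochner_Integration.integrable_sum)
  have intP: "integrable lborel (\<lambda>x. s\<^sup>2 / 2 * N * p x)"
    using intp by (auto intro!: Bochner_Integration.integrable_mult_right)
  have "(\<integral>x. p x * ln (mix_pdf \<mu> x) + s * (\<Sum>i\<in>UNIV. g i \<bullet> F i x) - s\<^sup>2 / 2 * N * p x \<partial>lborel)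
      \<le> (\<integral>x. p x * ln (mix_pdf \<mu>' x) \<partial>lborel)"
    using int1 int2 intS intP pw by (intro integral_mono) auto
  moreover have "(\<integral>x. p x * ln (mix_pdf \<mu> x) + s * (\<Sum>i\<in>UNIV. g i \<bullet> F i x) - s\<^sup>2 / 2 * N * p x \<partial>lborel)
      = pop_loglik \<mu>star \<mu> + s * N - s\<^sup>2 / 2 * N"
  proof -
    have "(\<integral>x. p x * ln (mix_pdf \<mu> x) + s * (\<Sum>i\<in>UNIV. g i \<bullet> F i x) - s\<^sup>2 / 2 * N * p x \<partial>lborel)
        = (\<integral>x. p x * ln (mix_pdf \<mu> x) \<partial>lborel) + (\<integral>x. s * (\<Sum>i\<in>UNIV. g i \<bullet> F i x) \<partial>lborel)
          - (\<integral>x. s\<^sup>2 / 2 * N * p x \<partial>lborel)"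
      using int1 intS intP by (simp add: Bochner_Integration.integral_add Bochner_Integration.integral_diff)
    also have "(\<integral>x. s * (\<Sum>i\<in>UNIV. g i \<bullet> F i x) \<partial>lborel) = s * (\<Sum>i\<in>UNIV. g i \<bullet> g i)"
      using intF by (simp add: Bochner_Integration.integral_sum gF)
    also have "(\<Sum>i\<in>UNIV. g i \<bullet> g i) = N"
      unfolding N_def' by (simp add: power2_norm_eq_inner)
    also have "(\<integral>x. s\<^sup>2 / 2 * N * p x \<partial>lborel) = s\<^sup>2 / 2 * N"
      unfolding p_def by (simp add: mix_integral)
    also have "(\<integral>x. p x * ln (mix_pdf \<mu> x) \<partial>lborel) = pop_loglik \<mu>star \<mu>"
      unfolding p_def pop_loglik_def ..
    finally show ?thesis .
  qed
  moreover have "(\<integral>x. p x * ln (mix_pdf \<mu>' x) \<partial>lborel) = pop_loglik \<mu>star (\<lambda>i. \<mu> i + s *\<^sub>R grad_loglik \<mu>star \<mu> i)"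
    unfolding p_def pop_loglik_def \<mu>'_def g_def ..
  ultimately have main: "pop_loglik \<mu>star \<mu> + s * N - s\<^sup>2 / 2 * N \<le> pop_loglik \<mu>star (\<lambda>i. \<mu> i + s *\<^sub>R grad_loglik \<mu>star \<mu> i)"
    by simp
  have N0: "0 \<le> N" unfolding N_def' by (simp add: sum_nonneg)
  have "s\<^sup>2 / 2 * N \<le> s / 2 * N"
    using assms N0 by (intro mult_right_mono) (auto simp: power2_eq_square)
  then have part1: "pop_loglik \<mu>star \<mu> + s / 2 * grad_norm_sq \<mu>star \<mu> \<le> pop_loglik \<mu>star (\<lambda>i. \<mu> i + s *\<^sub>R grad_loglik \<mu>star \<mu> i)"
    using main unfolding N_def[symmetric] by linarith
  have part2: "pop_loglik \<mu>star (\<lambda>i. \<mu> i + s *\<^sub>R grad_loglik \<mu>star \<mu> i) > pop_loglik \<mu>star \<mu>"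
    if "\<exists>i. grad_loglik \<mu>star \<mu> i \<noteq> 0"
  proof -
    from that obtain i where i: "g i \<noteq> 0" unfolding g_def by auto
    have "0 < (norm (g i))\<^sup>2" using i by simp
    also have "\<dots> \<le> N" unfolding N_def' by (rule member_le_sum) auto
    finally have Np: "0 < N" .
    have "0 < s * N * (1 - s / 2)" using assms Np by (intro mult_pos_pos) auto
    then have "0 < s * N - s\<^sup>2 / 2 * N" by (simp add: power2_eq_square algebra_simps)
    then show ?thesis using main by linarith
  qed
  show ?thesis using part1 part2 by blast
qed

end
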